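(* For all natural numbers $t\ge 6$ and $s\ge 5$, $\mathrm{toi}(K_{2t}\times K_s)\ge ts$.
   Context: All graphs are finite, simple and loopless. A graph $G$ contains a graph $F$ as a totally odd strong immersion if there is an injective map $\varphi\colon V(F)\to V(G)$ (terminals) and, for every edge $uv\in E(F)$, a path $P_{uv}$ in $G$ with endpoints $\varphi(u),\varphi(v)$, such that the paths are pairwise edge-disjoint, no terminal is an interior vertex of any of them, and every $P_{uv}$ has odd length. $\mathrm{toi}(G)$ is the maximum $t$ such that $G$ contains $K_t$ as a totally odd strong immersion. The direct product $G\times H$ has vertex set $V(G)\times V(H)$, with $(g_1,h_1)\sim(g_2,h_2)$ iff $g_1g_2\in E(G)$ and $h_1h_2\in E(H)$. *)

theory Defs
  imports Main
begin

text \<open>A (finite, simple, loopless) graph is a pair (V, E) of a vertex set and a set of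
  edges, each edge being a two-element set of vertices.\<close>

type_synonym 'a graph = "'a set \<times> 'a set set"

definition verts :: "'a graph \<Rightarrow> 'a set" where "verts G = fst G"
definition edges :: "'a graph \<Rightarrow> 'a set set" where "edges G = snd G"

definition complete_graph :: "nat \<Rightarrow> nat graph" where
  "complete_graph n = ({0..<n}, {{i, j} | i j. i < n \<and> j < n \<and> i \<noteq> j})"

definition direct_product :: "'a graph \<Rightarrow> 'b graph \<Rightarrow> ('a \<times> 'b) graph" where
  "direct_product G H =
     (verts G \<times> verts H,
      {{(g1, h1), (g2, h2)} | g1 h1 g2 h2.
         {g1, g2} \<in> edges G \<and> {h1, h2} \<in> edges H})"

definition is_path :: "'a graph \<Rightarrow> 'a list \<Rightarrow> bool" where
  "is_path G xs \<longleftrightarrow> xs \<noteq> [] \<and> distinct xs \<and> set xs \<subseteq> verts G \<and>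
     (\<forall>i. Suc i < length xs \<longrightarrow> {xs ! i, xs ! Suc i} \<in> edges G)"

definition path_edges :: "'a list \<Rightarrow> 'a set set" where
  "path_edges xs = {{xs ! i, xs ! Suc i} | i. Suc i < length xs}"

definition path_len :: "'a list \<Rightarrow> nat" where
  "path_len xs = length xs - 1"

definition interior :: "'a list \<Rightarrow> 'a set" where
  "interior xs = set (butlast (tl xs))"

definition totally_odd_strong_immersion ::
  "'a graph \<Rightarrow> 'b graph \<Rightarrow> ('b \<Rightarrow> 'a) \<Rightarrow> ('b set \<Rightarrow> 'a list) \<Rightarrow> bool" where
  "totally_odd_strong_immersion G F \<phi> P \<longleftrightarrow>
     inj_on \<phi> (verts F) \<and> \<phi> ` verts F \<subseteq> verts G \<and>
     (\<forall>e \<in> edges F. is_path G (P e) \<and> {hd (P e), last (P e)} = \<phi> ` e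
                     \<and> odd (path_len (P e))) \<and>
     (\<forall>e \<in> edges F. \<forall>e' \<in> edges F. e \<noteq> e' \<longrightarrow> path_edges (P e) \<inter> path_edges (P e') = {}) \<and>
     (\<forall>e \<in> edges F. \<forall>x \<in> verts F. \<phi> x \<notin> interior (P e))"

definition contains_toi :: "'a graph \<Rightarrow> 'b graph \<Rightarrow> bool" where
  "contains_toi G F \<longleftrightarrow> (\<exists>\<phi> P. totally_odd_strong_immersion G F \<phi> P)"

definition toi :: "'a graph \<Rightarrow> nat" where
  "toi G = (GREATEST t. contains_toi G (complete_graph t))"

end

theory Submission
  imports Defs
begin


definition beats :: "nat \<Rightarrow> nat \<Rightarrow> nat \<Rightarrow> bool" where
  "beats t i j \<longleftrightarrow> (i < j \<and> \<not> (i = 0 \<and> j = t - 1)) \<or> (i = t - 1 \<and> j = 0)"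

definition up :: "nat \<Rightarrow> nat \<Rightarrow> nat \<Rightarrow> nat \<Rightarrow> nat \<Rightarrow> nat" where
  "up t s i j b = (if beats t i j then (b + 1) mod s else (b + s - 1) mod s)"

definition psi :: "nat \<Rightarrow> nat \<Rightarrow> nat \<Rightarrow> nat \<Rightarrow> nat \<Rightarrow> nat" where
  "psi t s i b c = (if c - b < s - 2 then (i + 1) mod t else (i + t - 1) mod t)"

fun route :: "nat \<Rightarrow> nat \<Rightarrow> nat \<times> nat \<Rightarrow> nat \<times> nat \<Rightarrow> (nat \<times> nat) list" where
  "route t s (i, b) (j, c) =
     (if i = j then [(i, b), (t + i, c), (t + psi t s i b c, b), (i, c)]
      else if b \<noteq> c then [(i, b), (j, c)]
      else [(i, b), (t + j, up t s i j b), (t + i, up t s j i b), (j, b)])"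

fun lexs :: "nat \<times> nat \<Rightarrow> nat \<times> nat \<Rightarrow> (nat \<times> nat) \<times> (nat \<times> nat)" where
  "lexs (i, b) (j, c) = (if i < j \<or> (i = j \<and> b < c) then ((i, b), (j, c)) else ((j, c), (i, b)))"

fun ownTN :: "nat \<Rightarrow> nat \<Rightarrow> nat \<times> nat \<Rightarrow> nat \<times> nat \<Rightarrow> (nat \<times> nat) \<times> (nat \<times> nat)" where
  "ownTN t s (i, b) (K, d) =
     (if K - t = i then ((i, b), (i, d))
      else if d = up t s i (K - t) b then lexs (i, b) (K - t, b)
      else ((i, d), (i, b)))"

fun ownNN :: "nat \<Rightarrow> nat \<Rightarrow> nat \<times> nat \<Rightarrow> nat \<times> nat \<Rightarrow> (nat \<times> nat) \<times> (nat \<times> nat)" where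
  "ownNN t s (K1, d1) (K2, d2) =
     (if K1 - t \<noteq> K2 - t \<and> beats t (K1 - t) (K2 - t) \<and> d2 = (d1 + 2) mod s
      then lexs (K1 - t, (d1 + 1) mod s) (K2 - t, (d1 + 1) mod s)
      else if K1 - t \<noteq> K2 - t \<and> beats t (K2 - t) (K1 - t) \<and> d1 = (d2 + 2) mod s
      then lexs (K1 - t, (d2 + 1) mod s) (K2 - t, (d2 + 1) mod s)
      else if d2 < d1 then ((K1 - t, d2), (K1 - t, d1)) else ((K2 - t, d1), (K2 - t, d2)))"

definition own :: "nat \<Rightarrow> nat \<Rightarrow> nat \<times> nat \<Rightarrow> nat \<times> nat \<Rightarrow> (nat \<times> nat) \<times> (nat \<times> nat)" where
  "own t s a b = (if fst a < t \<and> fst b < t then lexs a b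
     else if fst a < t then ownTN t s a b else if fst b < t then ownTN t s b a else ownNN t s a b)"

lemma m1: "(b::nat) < s \<Longrightarrow> Suc b mod s = (if Suc b < s then Suc b else 0)"
  by (metis Suc_lessI mod_less mod_self)
lemma m2: "(b::nat) < s \<Longrightarrow> 2 \<le> s \<Longrightarrow> Suc (Suc b) mod s = (if Suc (Suc b) < s then Suc (Suc b) else Suc (Suc b) - s)"
  by (simp add: le_mod_geq)
lemma mm1: "(b::nat) < s \<Longrightarrow> (b + s - Suc 0) mod s = (if b = 0 then s - 1 else b - 1)"
  by (cases b) (auto simp: mod_if)

lemma beats_succ: "3 \<le> t \<Longrightarrow> i < t \<Longrightarrow> beats t i ((i + 1) mod t)"
  by (auto simp: beats_def m1)
lemma beats_pred: "3 \<le> t \<Longrightarrow> i < t \<Longrightarrow> beats t ((i + t - 1) mod t) i"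
  by (auto simp: beats_def mm1)
lemma beats_asym: "3 \<le> t \<Longrightarrow> i < t \<Longrightarrow> j < t \<Longrightarrow> beats t i j \<Longrightarrow> \<not> beats t j i"
  by (auto simp: beats_def)
lemma beats_total: "i < t \<Longrightarrow> j < t \<Longrightarrow> i \<noteq> j \<Longrightarrow> beats t i j \<or> beats t j i"
  by (auto simp: beats_def)
lemma succ_ne: "3 \<le> (t::nat) \<Longrightarrow> i < t \<Longrightarrow> (i + 1) mod t \<noteq> i"
  by (auto simp: m1)
lemma pred_ne: "3 \<le> (t::nat) \<Longrightarrow> i < t \<Longrightarrow> (i + t - 1) mod t \<noteq> i"
  by (auto simp: mm1)
lemma up_lt: "0 < s \<Longrightarrow> up t s i j b < s"
  by (simp add: up_def)

lemma psi_props: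
  assumes "3 \<le> t" "5 \<le> s" "i < t" "b < c" "c < s"
  shows "psi t s i b c < t" "psi t s i b c \<noteq> i"
    "ownTN t s (i, c) (t + psi t s i b c, b) = ((i, b), (i, c))"
    "ownNN t s (t + i, c) (t + psi t s i b c, b) = ((i, b), (i, c))"
    "ownNN t s (t + psi t s i b c, b) (t + i, c) = ((i, b), (i, c))"
proof -
  show "psi t s i b c < t" using assms by (simp add: psi_def)
  show "psi t s i b c \<noteq> i" using assms succ_ne[of t i] pred_ne[of t i] by (simp add: psi_def)
  show "ownTN t s (i, c) (t + psi t s i b c, b) = ((i, b), (i, c))"
  proof (cases "c - b < s - 2")
    case True
    then show ?thesis using assms beats_succ[of t i] succ_ne[of t i]
      by (auto simp: psi_def up_def m1)
  next
    case False
    then show ?thesis using assms beats_pred[of t i] pred_ne[of t i]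
       beats_asym[of t "(i + t - 1) mod t" i]
      by (auto simp: psi_def up_def mm1)
  qed
  show "ownNN t s (t + i, c) (t + psi t s i b c, b) = ((i, b), (i, c))"
  proof (cases "c - b < s - 2")
    case True
    then show ?thesis using assms beats_succ[of t i] succ_ne[of t i]
       beats_asym[of t i "(i + 1) mod t"]
      by (auto simp: psi_def m2)
  next
    case False
    then show ?thesis using assms beats_pred[of t i] pred_ne[of t i]
       beats_asym[of t "(i + t - 1) mod t" i]
      by (auto simp: psi_def m2)
  qed
  show "ownNN t s (t + psi t s i b c, b) (t + i, c) = ((i, b), (i, c))"
  proof (cases "c - b < s - 2")
    case True
    then show ?thesis using assms beats_succ[of t i] succ_ne[of t i]
       beats_asym[of t i "(i + 1) mod t"]
      by (auto simp: psi_def m2)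
  next
    case False
    then show ?thesis using assms beats_pred[of t i] pred_ne[of t i]
       beats_asym[of t "(i + t - 1) mod t" i]
      by (auto simp: psi_def m2)
  qed
qed



lemma pe4: "path_edges [a,b,c,d] = {{a,b},{b,c},{c,d}}"
  apply (auto simp: path_edges_def less_Suc_eq numeral_eq_Suc)
    apply (rule exI[of _ 0]; simp)
   apply (rule exI[of _ "Suc 0"]; simp)
  apply (rule exI[of _ "Suc (Suc 0)"]; simp)
  done
lemma pe2: "path_edges [a,b] = {{a,b}}"
  by (auto simp: path_edges_def)

lemma ar1: "(b::nat) < s \<Longrightarrow> 3 \<le> s \<Longrightarrow> ((b + s - 1) mod s + 2) mod s = (b + 1) mod s"
  by (cases b) (auto simp: mod_if)
lemma ar2: "(b::nat) < s \<Longrightarrow> ((b + s - 1) mod s + 1) mod s = b"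
  by (cases b) (auto simp: mod_if)

lemma ownNN_B:
  assumes "3 \<le> t" "3 \<le> s" "i < t" "j < t" "i < j" "b < s"
  shows "ownNN t s (t + j, up t s i j b) (t + i, up t s j i b) = ((i, b), (j, b))"
    "ownNN t s (t + i, up t s j i b) (t + j, up t s i j b) = ((i, b), (j, b))"
proof -
  have ij: "i \<noteq> j" using assms by simp
  consider "beats t i j" "\<not> beats t j i" | "beats t j i" "\<not> beats t i j"
    using beats_total[OF assms(3,4) ij] beats_asym[of t i j] beats_asym[of t j i] assms by blast
  then have "ownNN t s (t + j, up t s i j b) (t + i, up t s j i b) = ((i, b), (j, b)) \<and>
    ownNN t s (t + i, up t s j i b) (t + j, up t s i j b) = ((i, b), (j, b))"
  proof cases
    case 1
    then show ?thesis using assms ar1[of b s] ar2[of b s] by (simp add: up_def)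
  next
    case 2
    then show ?thesis using assms ar1[of b s] ar2[of b s] by (simp add: up_def)
  qed
  then show "ownNN t s (t + j, up t s i j b) (t + i, up t s j i b) = ((i, b), (j, b))"
    "ownNN t s (t + i, up t s j i b) (t + j, up t s i j b) = ((i, b), (j, b))" by auto
qed

lemma route_own:
  assumes "3 \<le> t" "5 \<le> s" "i < t" "j < t" "b < s" "c < s" "i < j \<or> (i = j \<and> b < c)"
    "E \<in> path_edges (route t s (i, b) (j, c))"
  shows "\<exists>u v. E = {u, v} \<and> own t s u v = ((i, b), (j, c)) \<and> own t s v u = ((i, b), (j, c))"
proof (cases "i = j")
  case True
  then have bc: "b < c" using assms by auto
  note P = psi_props[OF assms(1,2,3) bc assms(6)]
  from assms(8) True bc have "E = {(i,b),(t+i,c)} \<or> E = {(t+i,c),(t+psi t s i b c, b)}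
     \<or> E = {(t + psi t s i b c, b),(i,c)}" by (simp add: pe4)
  then show ?thesis
  proof (elim disjE)
    assume "E = {(i,b),(t+i,c)}"
    then show ?thesis using bc True assms
      by (intro exI[of _ "(i,b)"] exI[of _ "(t+i,c)"]) (simp add: own_def)
  next
    assume "E = {(t+i,c),(t+psi t s i b c, b)}"
    then show ?thesis using bc True assms P
      by (intro exI[of _ "(t+i,c)"] exI[of _ "(t+psi t s i b c, b)"]) (simp add: own_def)
  next
    assume "E = {(t + psi t s i b c, b),(i,c)}"
    then show ?thesis using bc True assms P
      by (intro exI[of _ "(t+psi t s i b c, b)"] exI[of _ "(i,c)"]) (simp add: own_def)
  qed
next
  case False
  then have ij: "i < j" using assms by auto
  show ?thesis
  proof (cases "b = c")
    case False
    with assms(8) ij have "E = {(i,b),(j,c)}" by (simp add: pe2)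
    then show ?thesis using ij assms
      by (intro exI[of _ "(i,b)"] exI[of _ "(j,c)"]) (simp add: own_def)
  next
    case True
    note N = ownNN_B[of t s i j b]
    from assms(8) ij True have "E = {(i,b),(t+j,up t s i j b)} \<or> E = {(t+j,up t s i j b),(t+i,up t s j i b)}
     \<or> E = {(t+i,up t s j i b),(j,b)}" by (simp add: pe4)
    then show ?thesis
    proof (elim disjE)
      assume "E = {(i,b),(t+j,up t s i j b)}"
      then show ?thesis using ij True assms
        by (intro exI[of _ "(i,b)"] exI[of _ "(t+j,up t s i j b)"]) (simp add: own_def)
    next
      assume "E = {(t+j,up t s i j b),(t+i,up t s j i b)}"
      then show ?thesis using ij True assms N
        by (intro exI[of _ "(t+j,up t s i j b)"] exI[of _ "(t+i,up t s j i b)"]) (simp add: own_def)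
    next
      assume "E = {(t+i,up t s j i b),(j,b)}"
      then show ?thesis using ij True assms
        by (intro exI[of _ "(t+i,up t s j i b)"] exI[of _ "(j,b)"]) (simp add: own_def)
    qed
  qed
qed



lemma verts_G: "verts (direct_product (complete_graph (2*t)) (complete_graph s)) = {0..<2*t} \<times> {0..<s}"
  by (simp add: direct_product_def verts_def complete_graph_def)

lemma dp_edge:
  assumes "g1 < 2*t" "g2 < 2*t" "g1 \<noteq> g2" "h1 < s" "h2 < s" "h1 \<noteq> h2"
  shows "{(g1,h1),(g2,h2)} \<in> edges (direct_product (complete_graph (2*t)) (complete_graph s))"
proof -
  have "{g1,g2} \<in> edges (complete_graph (2*t))" "{h1,h2} \<in> edges (complete_graph s)"
    using assms by (auto simp: edges_def complete_graph_def)
  then show ?thesis unfolding direct_product_def edges_def by auto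
qed

lemma is_path4:
  "distinct [a,b,c,d] \<Longrightarrow> set [a,b,c,d] \<subseteq> verts G \<Longrightarrow> {a,b} \<in> edges G \<Longrightarrow> {b,c} \<in> edges G
   \<Longrightarrow> {c,d} \<in> edges G \<Longrightarrow> is_path G [a,b,c,d]"
  by (auto simp: is_path_def less_Suc_eq numeral_eq_Suc)

lemma is_path2:
  "a \<noteq> b \<Longrightarrow> set [a,b] \<subseteq> verts G \<Longrightarrow> {a,b} \<in> edges G \<Longrightarrow> is_path G [a,b]"
  by (auto simp: is_path_def less_Suc_eq)

lemma route_good:
  assumes "3 \<le> t" "5 \<le> s" "i < t" "j < t" "b < s" "c < s" "i < j \<or> (i = j \<and> b < c)"
  shows "is_path (direct_product (complete_graph (2*t)) (complete_graph s)) (route t s (i, b) (j, c))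
    \<and> hd (route t s (i, b) (j, c)) = (i, b) \<and> last (route t s (i, b) (j, c)) = (j, c)
    \<and> odd (path_len (route t s (i, b) (j, c)))
    \<and> (\<forall>w \<in> interior (route t s (i, b) (j, c)). t \<le> fst w)"
proof (cases "i = j")
  case True
  then have bc: "b < c" using assms by auto
  note P = psi_props[OF assms(1,2,3) bc assms(6)]
  show ?thesis using True bc assms P
    by (auto simp: path_len_def interior_def verts_G intro!: is_path4 dp_edge)
next
  case False
  then have ij: "i < j" using assms by auto
  show ?thesis
  proof (cases "b = c")
    case False
    then show ?thesis using ij assms
      by (auto simp: path_len_def interior_def verts_G intro!: is_path2 dp_edge)
  next
    case True
    have s0: "0 < s" using assms by simp
    have ne: "up t s i j b \<noteq> b" "up t s j i b \<noteq> b" "up t s i j b \<noteq> up t s j i b"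
    proof -
      have bt: "beats t i j \<longleftrightarrow> \<not> beats t j i"
        using beats_total[of i t j] beats_asym[of t i j] assms ij by auto
      show "up t s i j b \<noteq> b" "up t s j i b \<noteq> b" "up t s i j b \<noteq> up t s j i b"
        using assms bt by (auto simp: up_def mod_if)
    qed
    show ?thesis using ij True assms up_lt[OF s0] ne
      by (auto simp: path_len_def interior_def verts_G intro!: is_path4 dp_edge)
  qed
qed



lemma div_order:
  assumes "(u::nat) < v" "0 < s"
  shows "u div s < v div s \<or> (u div s = v div s \<and> u mod s < v mod s)"
proof -
  have "u div s \<le> v div s" using assms by (simp add: div_le_mono)
  moreover have "u mod s < v mod s" if h: "u div s = v div s"
  proof -
    have "u div s * s + u mod s < v div s * s + v mod s" using assms by simp
    then show ?thesis using h by (metis nat_add_left_cancel_less)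
  qed
  ultimately show ?thesis by linarith
qed

lemma verts_K: "verts (complete_graph n) = {0..<n}"
  by (simp add: verts_def complete_graph_def)

lemma edge_K: "e \<in> edges (complete_graph n) \<Longrightarrow> \<exists>u v. e = {u, v} \<and> u < v \<and> v < n"
  unfolding edges_def complete_graph_def
  by (auto simp: insert_commute) (metis insert_commute linorder_neqE_nat)

theorem mainTheorem4:
  fixes t s :: nat
  assumes "t \<ge> 6" and "s \<ge> 5"
  shows "t * s \<le> toi (direct_product (complete_graph (2 * t)) (complete_graph s))"
proof -
  define G where "G = direct_product (complete_graph (2 * t)) (complete_graph s)"
  define \<phi> where "\<phi> = (\<lambda>n::nat. (n div s, n mod s))"
  define P where "P = (\<lambda>e::nat set. route t s (\<phi> (Min e)) (\<phi> (Max e)))"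
  have t3: "3 \<le> t" and s5: "5 \<le> s" and s0: "0 < s" using assms by auto
  have injphi: "inj \<phi>"
    unfolding inj_def \<phi>_def by (metis div_mult_mod_eq prod.inject)
  have Pe: "P {u, v} = route t s (u div s, u mod s) (v div s, v mod s)" if "u < v" for u v
    using that by (simp add: P_def \<phi>_def)
  have rng: "u div s < t" "u mod s < s" "u div s < 2 * t" if "u < t * s" for u
    using that s0 by (auto simp: less_mult_imp_div_less)
  have good: "is_path G (P {u,v}) \<and> hd (P {u,v}) = \<phi> u \<and> last (P {u,v}) = \<phi> v
    \<and> odd (path_len (P {u,v})) \<and> (\<forall>w \<in> interior (P {u,v}). t \<le> fst w)"
    if "u < v" "v < t * s" for u v
    using route_good[OF t3 s5 rng(1)[of u] rng(1)[of v] rng(2)[of u] rng(2)[of v] div_order[OF that(1) s0]]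
      that Pe[OF that(1)] unfolding G_def \<phi>_def by auto
  have own: "\<exists>a b. E = {a, b} \<and> own t s a b = (\<phi> u, \<phi> v) \<and> own t s b a = (\<phi> u, \<phi> v)"
    if "u < v" "v < t * s" "E \<in> path_edges (P {u,v})" for u v E
    using route_own[OF t3 s5 rng(1)[of u] rng(1)[of v] rng(2)[of u] rng(2)[of v] div_order[OF that(1) s0]]
      that Pe[OF that(1)] unfolding \<phi>_def by auto
  have imm: "totally_odd_strong_immersion G (complete_graph (t * s)) \<phi> P"
    unfolding totally_odd_strong_immersion_def
  proof (intro conjI ballI impI)
    show "inj_on \<phi> (verts (complete_graph (t * s)))" using injphi by (simp add: inj_on_def inj_def)
    show "\<phi> ` verts (complete_graph (t * s)) \<subseteq> verts G"
      using rng by (auto simp: G_def verts_G verts_K \<phi>_def)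
  next
    fix e assume "e \<in> edges (complete_graph (t * s))"
    then obtain u v where e: "e = {u, v}" "u < v" "v < t * s" using edge_K by blast
    show "is_path G (P e)" using good[OF e(2,3)] e by simp
    show "{hd (P e), last (P e)} = \<phi> ` e" using good[OF e(2,3)] e by simp
    show "odd (path_len (P e))" using good[OF e(2,3)] e by simp
  next
    fix e x assume "e \<in> edges (complete_graph (t * s))" "x \<in> verts (complete_graph (t * s))"
    then obtain u v where e: "e = {u, v}" "u < v" "v < t * s" using edge_K by blast
    have "x < t * s" using \<open>x \<in> _\<close> by (simp add: verts_K)
    then have "fst (\<phi> x) < t" using rng by (simp add: \<phi>_def)
    then show "\<phi> x \<notin> interior (P e)" using good[OF e(2,3)] e by force
  next
    fix e e' assume ee: "e \<in> edges (complete_graph (t * s))" "e' \<in> edges (complete_graph (t * s))" "e \<noteq> e'"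
    obtain u v where e: "e = {u, v}" "u < v" "v < t * s" using edge_K ee(1) by blast
    obtain u' v' where e': "e' = {u', v'}" "u' < v'" "v' < t * s" using edge_K ee(2) by blast
    show "path_edges (P e) \<inter> path_edges (P e') = {}"
    proof (rule ccontr)
      assume "path_edges (P e) \<inter> path_edges (P e') \<noteq> {}"
      then obtain E where E: "E \<in> path_edges (P e)" "E \<in> path_edges (P e')" by blast
      obtain a b where ab: "E = {a, b}" "own t s a b = (\<phi> u, \<phi> v)" "own t s b a = (\<phi> u, \<phi> v)"
        using own[OF e(2,3)] E(1) e(1) by blast
      obtain a' b' where ab': "E = {a', b'}" "own t s a' b' = (\<phi> u', \<phi> v')" "own t s b' a' = (\<phi> u', \<phi> v')"
        using own[OF e'(2,3)] E(2) e'(1) by blast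
      have "(\<phi> u, \<phi> v) = (\<phi> u', \<phi> v')"
        using ab ab' by (metis doubleton_eq_iff)
      then have "u = u'" "v = v'" using injphi by (auto dest: injD)
      then show False using e e' ee(3) by simp
    qed
  qed
  have c: "contains_toi G (complete_graph (t * s))"
    unfolding contains_toi_def using imm by blast
  have bound: "n \<le> 2 * t * s" if cn: "contains_toi G (complete_graph n)" for n
  proof -
    obtain f Q where "totally_odd_strong_immersion G (complete_graph n) f Q"
      using cn unfolding contains_toi_def by blast
    then have "inj_on f {0..<n}" "f ` {0..<n} \<subseteq> {0..<2*t} \<times> {0..<s}"
      unfolding totally_odd_strong_immersion_def G_def
      by (auto simp: verts_G verts_K)
    then have "card {0..<n} \<le> card ({0..<2*t} \<times> {0..<s})"
      by (intro card_inj_on_le) auto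
    then show ?thesis by (simp add: card_cartesian_product)
  qed
  show ?thesis
    unfolding toi_def G_def[symmetric]
    by (rule Greatest_le_nat[of _ _ "2 * t * s"]) (use c bound in auto)
qed

end
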